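(* Let $Q$ be a quiver without oriented cycles, $\mathbf D=k\tilde Q/\mathcal I$, $i$ a source of $Q$, and $M$ a $\Delta$-filtered $\mathbf D$-module with $d_i=(\underline{\dim}_\Delta M)_i>0$. Then $M$ has a unique submodule isomorphic to $\Delta(i)^{d_i}$, and the quotient $M/\Delta(i)^{d_i}$ is $\Delta$-filtered.
   Context: $k$ is an algebraically closed field. $\tilde Q$ is the double of $Q$ (arrows $\alpha\in Q_1$ and $\alpha^*:t(\alpha)\to s(\alpha)$), paths composed right to left; $\mathcal I\subseteq k\tilde Q$ is generated by $\alpha^*\alpha-\sum_{\gamma\in Q_1,t(\gamma)=s(\alpha)}\gamma\gamma^*$ ($\alpha\in Q_1$) and $\beta^*\alpha$ ($\alpha\ne\beta\in Q_1$, $t(\alpha)=t(\beta)$). $\Delta(i)$ is the indecomposable projective $kQ$-module with top $L(i)$, a $\mathbf D$-module via $\mathbf D\to kQ$ (killing the $\alpha^*$). $\Delta$-filtered: has a filtration by submodules with successive quotients among the $\Delta(j)$ (equivalently, projective as a $kQ$-module). $\underline{\dim}_\Delta(M)_i$ is the multiplicity of $\Delta(i)$ in such a filtration. A source is a vertex at which no arrow of $Q$ ends. *)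

theory Defs
  imports "HOL-Computational_Algebra.Polynomial"
begin

definition alg_closed :: "'k::field itself \<Rightarrow> bool" where
  "alg_closed _ \<longleftrightarrow> (\<forall>p :: 'k poly. degree p \<ge> 1 \<longrightarrow> (\<exists>x. poly p x = 0))"

text \<open>A finite quiver Q: vertices of type 'v, arrows of type 'a, source map s, target map t.
  Arrows of the double quiver: Inl a = a, Inr a = a^*.\<close>
fun ds :: "('a \<Rightarrow> 'v) \<Rightarrow> ('a \<Rightarrow> 'v) \<Rightarrow> 'a + 'a \<Rightarrow> 'v" where
  "ds s t (Inl a) = s a" | "ds s t (Inr a) = t a"
fun dt :: "('a \<Rightarrow> 'v) \<Rightarrow> ('a \<Rightarrow> 'v) \<Rightarrow> 'a + 'a \<Rightarrow> 'v" where
  "dt s t (Inl a) = t a" | "dt s t (Inr a) = s a"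

text \<open>Paths of Q, listed in traversal order: qpath s t u p v means p is a path from u to v.\<close>
fun qpath :: "('a \<Rightarrow> 'v) \<Rightarrow> ('a \<Rightarrow> 'v) \<Rightarrow> 'v \<Rightarrow> 'a list \<Rightarrow> 'v \<Rightarrow> bool" where
  "qpath s t u [] v = (u = v)"
| "qpath s t u (a # ps) v = (s a = u \<and> qpath s t (t a) ps v)"

text \<open>A representation of the double quiver: at vertex v the vector space k^(qbas v)
  (functions supported on the finite basis set qbas v), each double arrow acting by a
  matrix qcoef a (indexed by basis elements: row y, column x).\<close>
record ('v, 'a, 'b, 'k) qrep =
  qbas :: "'v \<Rightarrow> 'b set"
  qcoef :: "'a + 'a \<Rightarrow> 'b \<Rightarrow> 'b \<Rightarrow> 'k"

definition vsp :: "('v, 'a, 'b, 'k::field) qrep \<Rightarrow> 'v \<Rightarrow> ('b \<Rightarrow> 'k) set" where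
  "vsp R v = {f. \<forall>x. x \<notin> qbas R v \<longrightarrow> f x = 0}"

definition act :: "('a \<Rightarrow> 'v) \<Rightarrow> ('a \<Rightarrow> 'v) \<Rightarrow> ('v, 'a, 'b, 'k::field) qrep
    \<Rightarrow> 'a + 'a \<Rightarrow> ('b \<Rightarrow> 'k) \<Rightarrow> ('b \<Rightarrow> 'k)" where
  "act s t R a f = (\<lambda>y. if y \<in> qbas R (dt s t a)
       then (\<Sum>x\<in>qbas R (ds s t a). qcoef R a y x * f x) else 0)"

text \<open>Modules over D = kQ~/I: finite-dimensional representations of the double quiver
  satisfying the relations (paths composed right to left).\<close>
definition D_module :: "('a \<Rightarrow> 'v) \<Rightarrow> ('a \<Rightarrow> 'v) \<Rightarrow> ('v, 'a, 'b, 'k::field) qrep \<Rightarrow> bool" where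
  "D_module s t R \<longleftrightarrow>
     (\<forall>v. finite (qbas R v)) \<and>
     (\<forall>\<alpha> f. f \<in> vsp R (s \<alpha>) \<longrightarrow>
        act s t R (Inr \<alpha>) (act s t R (Inl \<alpha>) f)
        = (\<lambda>y. \<Sum>\<gamma>\<in>{\<gamma>. t \<gamma> = s \<alpha>}. act s t R (Inl \<gamma>) (act s t R (Inr \<gamma>) f) y)) \<and>
     (\<forall>\<alpha> \<beta> f. \<alpha> \<noteq> \<beta> \<and> t \<alpha> = t \<beta> \<and> f \<in> vsp R (s \<alpha>) \<longrightarrow>
        act s t R (Inr \<beta>) (act s t R (Inl \<alpha>) f) = (\<lambda>_. 0))"

definition subsp :: "('b \<Rightarrow> 'k::field) set \<Rightarrow> ('b \<Rightarrow> 'k) set \<Rightarrow> bool" where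
  "subsp W S \<longleftrightarrow> S \<subseteq> W \<and> (\<lambda>_. 0) \<in> S \<and>
     (\<forall>x\<in>S. \<forall>y\<in>S. (\<lambda>b. x b + y b) \<in> S) \<and> (\<forall>c. \<forall>x\<in>S. (\<lambda>b. c * x b) \<in> S)"

definition submod :: "('a \<Rightarrow> 'v) \<Rightarrow> ('a \<Rightarrow> 'v) \<Rightarrow> ('v, 'a, 'b, 'k::field) qrep
    \<Rightarrow> ('v \<Rightarrow> ('b \<Rightarrow> 'k) set) \<Rightarrow> bool" where
  "submod s t R U \<longleftrightarrow> (\<forall>v. subsp (vsp R v) (U v)) \<and>
     (\<forall>a f. f \<in> U (ds s t a) \<longrightarrow> act s t R a f \<in> U (dt s t a))"

definition zero_sub :: "('v, 'a, 'b, 'k::field) qrep \<Rightarrow> 'v \<Rightarrow> ('b \<Rightarrow> 'k) set" where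
  "zero_sub R = (\<lambda>v. {\<lambda>_. 0})"

definition happ :: "('v, 'a, 'c, 'k::field) qrep \<Rightarrow> ('v, 'a, 'b, 'k) qrep
    \<Rightarrow> ('v \<Rightarrow> 'b \<Rightarrow> 'c \<Rightarrow> 'k) \<Rightarrow> 'v \<Rightarrow> ('c \<Rightarrow> 'k) \<Rightarrow> ('b \<Rightarrow> 'k)" where
  "happ N M \<phi> v g = (\<lambda>y. if y \<in> qbas M v then (\<Sum>x\<in>qbas N v. \<phi> v y x * g x) else 0)"

definition is_hom :: "('a \<Rightarrow> 'v) \<Rightarrow> ('a \<Rightarrow> 'v) \<Rightarrow> ('v, 'a, 'c, 'k::field) qrep
    \<Rightarrow> ('v, 'a, 'b, 'k) qrep \<Rightarrow> ('v \<Rightarrow> 'b \<Rightarrow> 'c \<Rightarrow> 'k) \<Rightarrow> bool" where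
  "is_hom s t N M \<phi> \<longleftrightarrow> (\<forall>a g. g \<in> vsp N (ds s t a) \<longrightarrow>
     happ N M \<phi> (dt s t a) (act s t N a g) = act s t M a (happ N M \<phi> (ds s t a) g))"

definition iso_onto :: "('a \<Rightarrow> 'v) \<Rightarrow> ('a \<Rightarrow> 'v) \<Rightarrow> ('v, 'a, 'c, 'k::field) qrep
    \<Rightarrow> ('v, 'a, 'b, 'k) qrep \<Rightarrow> ('v \<Rightarrow> 'b \<Rightarrow> 'c \<Rightarrow> 'k) \<Rightarrow> ('v \<Rightarrow> ('b \<Rightarrow> 'k) set) \<Rightarrow> bool" where
  "iso_onto s t N M \<phi> U \<longleftrightarrow> is_hom s t N M \<phi> \<and>
     (\<forall>v. inj_on (happ N M \<phi> v) (vsp N v) \<and> happ N M \<phi> v ` vsp N v = U v)"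

text \<open>For submodules A \<subseteq> B of M: B/A is isomorphic to N.\<close>
definition subquot_iso :: "('a \<Rightarrow> 'v) \<Rightarrow> ('a \<Rightarrow> 'v) \<Rightarrow> ('v, 'a, 'b, 'k::field) qrep
    \<Rightarrow> ('v \<Rightarrow> ('b \<Rightarrow> 'k) set) \<Rightarrow> ('v \<Rightarrow> ('b \<Rightarrow> 'k) set) \<Rightarrow> ('v, 'a, 'c, 'k) qrep \<Rightarrow> bool" where
  "subquot_iso s t M A B N \<longleftrightarrow> (\<exists>\<phi>.
     (\<forall>v g. g \<in> vsp N v \<longrightarrow> happ N M \<phi> v g \<in> B v) \<and>
     (\<forall>v g. g \<in> vsp N v \<and> happ N M \<phi> v g \<in> A v \<longrightarrow> g = (\<lambda>_. 0)) \<and>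
     (\<forall>v y. y \<in> B v \<longrightarrow> (\<exists>g\<in>vsp N v. (\<lambda>b. y b - happ N M \<phi> v g b) \<in> A v)) \<and>
     (\<forall>a g. g \<in> vsp N (ds s t a) \<longrightarrow>
        (\<lambda>b. act s t M a (happ N M \<phi> (ds s t a) g) b - happ N M \<phi> (dt s t a) (act s t N a g) b)
          \<in> A (dt s t a)))"

text \<open>Standard module Delta(j): the indecomposable projective kQ-module kQ e_j (basis: paths
  of Q starting at j), arrows of Q acting by composition, the alpha^* acting by zero.\<close>
definition Delta :: "('a \<Rightarrow> 'v) \<Rightarrow> ('a \<Rightarrow> 'v) \<Rightarrow> 'v \<Rightarrow> ('v, 'a, 'a list, 'k::field) qrep" where
  "Delta s t j = \<lparr> qbas = (\<lambda>v. {p. qpath s t j p v}),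
     qcoef = (\<lambda>a q p. case a of Inl \<alpha> \<Rightarrow> (if q = p @ [\<alpha>] then 1 else 0) | Inr \<alpha> \<Rightarrow> 0) \<rparr>"

definition Delta_pow :: "('a \<Rightarrow> 'v) \<Rightarrow> ('a \<Rightarrow> 'v) \<Rightarrow> 'v \<Rightarrow> nat
    \<Rightarrow> ('v, 'a, 'a list \<times> nat, 'k::field) qrep" where
  "Delta_pow s t j d = \<lparr> qbas = (\<lambda>v. {(p, l). qpath s t j p v \<and> l < d}),
     qcoef = (\<lambda>a (q, l') (p, l). case a of
                Inl \<alpha> \<Rightarrow> (if q = p @ [\<alpha>] \<and> l' = l then 1 else 0) | Inr \<alpha> \<Rightarrow> 0) \<rparr>"

text \<open>For L = 0 this is a Delta-filtration of M;
  by the correspondence theorem, for general L it is a Delta-filtration of M/L.\<close>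
definition delta_filtration :: "('a \<Rightarrow> 'v) \<Rightarrow> ('a \<Rightarrow> 'v) \<Rightarrow> ('v, 'a, 'b, 'k::field) qrep
    \<Rightarrow> ('v \<Rightarrow> ('b \<Rightarrow> 'k) set) \<Rightarrow> nat \<Rightarrow> (nat \<Rightarrow> 'v \<Rightarrow> ('b \<Rightarrow> 'k) set) \<Rightarrow> (nat \<Rightarrow> 'v) \<Rightarrow> bool" where
  "delta_filtration s t M L r F j \<longleftrightarrow>
     F 0 = L \<and> F r = vsp M \<and> (\<forall>l\<le>r. submod s t M (F l)) \<and>
     (\<forall>l<r. \<forall>v. F l v \<subseteq> F (Suc l) v) \<and>
     (\<forall>l<r. subquot_iso s t M (F l) (F (Suc l)) (Delta s t (j l) :: ('v, 'a, 'a list, 'k) qrep))"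

end

theory Submission
  imports Defs "HOL-Library.Function_Algebras"
begin

definition sc :: "'k::field \<Rightarrow> ('b \<Rightarrow> 'k) \<Rightarrow> ('b \<Rightarrow> 'k)" where
  "sc c f = (\<lambda>b. c * f b)"

lemma sc_apply[simp]: "sc c f b = c * f b" by (simp add: sc_def)

interpretation fv: vector_space "sc :: 'k::field \<Rightarrow> ('b \<Rightarrow> 'k) \<Rightarrow> ('b \<Rightarrow> 'k)"
  by unfold_locales (auto simp: sc_def fun_eq_iff algebra_simps)

lemma sum_apply: "(sum f A) x = sum (\<lambda>a. f a x) A"
  by (induction A rule: infinite_finite_induct) auto

definition dl :: "'x \<Rightarrow> 'x \<Rightarrow> 'k::field" where
  "dl x = (\<lambda>z. if z = x then 1 else 0)"

lemma subsp_zero: "subsp W S \<Longrightarrow> 0 \<in> S"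
  by (simp add: subsp_def zero_fun_def)
lemma subsp_add: "subsp W S \<Longrightarrow> x \<in> S \<Longrightarrow> y \<in> S \<Longrightarrow> x + y \<in> S"
  by (simp add: subsp_def plus_fun_def)
lemma subsp_sc: "subsp W S \<Longrightarrow> x \<in> S \<Longrightarrow> sc c x \<in> S"
  by (simp add: subsp_def sc_def)
lemma neg_sc: "- (f::'b\<Rightarrow>'k::field) = sc (-1) f" by (simp add: fun_eq_iff)
lemma subsp_neg: "subsp W S \<Longrightarrow> x \<in> S \<Longrightarrow> - x \<in> S"
  using subsp_sc[of W S x "-1"] by (simp only: neg_sc)
lemma subsp_diff: "subsp W S \<Longrightarrow> x \<in> S \<Longrightarrow> y \<in> S \<Longrightarrow> x - y \<in> S"
  by (metis subsp_add subsp_neg diff_conv_add_uminus)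
lemma subsp_sum: "subsp W S \<Longrightarrow> (\<And>a. a \<in> A \<Longrightarrow> f a \<in> S) \<Longrightarrow> sum f A \<in> S"
  by (induction A rule: infinite_finite_induct) (auto intro: subsp_zero subsp_add)
lemma subsp_sub: "subsp W S \<Longrightarrow> x \<in> S \<Longrightarrow> x \<in> W"
  by (auto simp: subsp_def)
lemma subsp_subspace: "subsp W S \<Longrightarrow> fv.subspace S"
  unfolding fv.subspace_def using subsp_zero subsp_add subsp_sc by blast

lemma vsp_zero[simp]: "0 \<in> vsp R v" by (simp add: vsp_def)
lemma subsp_vsp: "subsp (vsp R v) (vsp R v)"
  by (auto simp: subsp_def vsp_def)

lemma act_add: "act s t R a (f + g) = act s t R a f + act s t R a g"
  by (auto simp: act_def fun_eq_iff algebra_simps sum.distrib)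
lemma act_sc: "act s t R a (sc c f) = sc c (act s t R a f)"
  by (auto simp: act_def fun_eq_iff algebra_simps sum_distrib_left)
lemma act_zero[simp]: "act s t R a 0 = 0"
  by (auto simp: act_def fun_eq_iff)
lemma act_zero'[simp]: "act s t R a (\<lambda>_. 0) = 0"
  by (auto simp: act_def fun_eq_iff)
lemma act_neg: "act s t R a (- f) = - act s t R a f"
  using act_sc[of s t R a "-1" f] by (simp only: neg_sc)
lemma act_diff: "act s t R a (f - g) = act s t R a f - act s t R a g"
  by (metis diff_conv_add_uminus act_add act_neg)
lemma act_sum: "act s t R a (sum f A) = (\<Sum>x\<in>A. act s t R a (f x))"
proof (induction A rule: infinite_finite_induct)
  case (insert x F)
  then show ?case using act_add[of s t R a "f x" "sum f F"] by (simp del: plus_fun_apply)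
qed simp_all
lemma act_vsp: "act s t R a f \<in> vsp R (dt s t a)"
  by (simp add: act_def vsp_def)

lemma happ_add: "happ N M \<phi> v (f + g) = happ N M \<phi> v f + happ N M \<phi> v g"
  by (auto simp: happ_def fun_eq_iff algebra_simps sum.distrib)
lemma happ_sc: "happ N M \<phi> v (sc c f) = sc c (happ N M \<phi> v f)"
  by (auto simp: happ_def fun_eq_iff algebra_simps sum_distrib_left)
lemma happ_zero[simp]: "happ N M \<phi> v 0 = 0"
  by (auto simp: happ_def fun_eq_iff)
lemma happ_neg: "happ N M \<phi> v (- f) = - happ N M \<phi> v f"
  using happ_sc[of N M \<phi> v "-1" f] by (simp only: neg_sc)
lemma happ_diff: "happ N M \<phi> v (f - g) = happ N M \<phi> v f - happ N M \<phi> v g"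
  by (metis diff_conv_add_uminus happ_add happ_neg)
lemma happ_vsp: "happ N M \<phi> v f \<in> vsp M v"
  by (simp add: happ_def vsp_def)

lemma happ_dl: "x \<in> qbas N v \<Longrightarrow> finite (qbas N v) \<Longrightarrow>
   happ N M \<phi> v (dl x) = (\<lambda>y. if y \<in> qbas M v then \<phi> v y x else 0)"
  unfolding happ_def dl_def by (auto simp: if_distrib cong: if_cong)

lemma happ_expand:
  assumes "finite (qbas N v)" "g \<in> vsp N v"
  shows "happ N M \<phi> v g = (\<Sum>x\<in>qbas N v. sc (g x) (happ N M \<phi> v (dl x)))"
proof -
  show ?thesis
  proof (rule ext)
  fix y show "happ N M \<phi> v g y = (\<Sum>x\<in>qbas N v. sc (g x) (happ N M \<phi> v (dl x))) y"
  proof -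
    have "(\<Sum>x\<in>qbas N v. sc (g x) (happ N M \<phi> v (dl x))) y
       = (\<Sum>x\<in>qbas N v. g x * (if y \<in> qbas M v then \<phi> v y x else 0))"
      unfolding sum_apply using assms(1) by (intro sum.cong) (auto simp: happ_dl)
    also have "\<dots> = happ N M \<phi> v g y"
      by (auto simp: happ_def mult.commute)
    finally show ?thesis by simp
  qed
  qed
qed



lemma qpath_append: "qpath s t u (p @ q) w \<longleftrightarrow> (\<exists>v. qpath s t u p v \<and> qpath s t v q w)"
  by (induction p arbitrary: u) auto

lemma qpath_snoc: "qpath s t u (p @ [a]) w \<longleftrightarrow> qpath s t u p (s a) \<and> t a = w"
  by (auto simp: qpath_append)

lemma qpath_to_source:
  assumes "\<forall>a. t a \<noteq> i" "qpath s t u p i" shows "p = [] \<and> u = i"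
  using assms(2)
proof (induction p arbitrary: u)
  case (Cons a ps)
  then show ?case using assms(1) by (cases ps) auto
qed simp

lemma qpath_butlast:
  assumes "qpath s t u q w" "q \<noteq> []" "last q = a"
  shows "qpath s t u (butlast q) (s a) \<and> q = butlast q @ [a] \<and> t a = w"
proof -
  have q: "q = butlast q @ [a]" using assms by (metis append_butlast_last_id)
  with assms(1) have "qpath s t u (butlast q @ [a]) w" by simp
  thus ?thesis using q qpath_snoc by metis
qed

lemma finite_paths_from:
  fixes s t :: "'a::finite \<Rightarrow> 'v::finite"
  assumes "acyclic {(s a, t a) | a. True}"
  shows "finite {p. \<exists>v. qpath s t u p v}"
proof -
  let ?R = "{(s a, t a) | a. True}"
  have "finite ?R" by (rule finite_subset[of _ UNIV]) auto
  hence wf: "wf (?R\<inverse>)" using assms finite_acyclic_wf_converse by blast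
  show ?thesis
  proof (induction u rule: wf_induct[OF wf])
    case (1 u)
    have sub: "{p. \<exists>v. qpath s t u p v} \<subseteq>
       insert [] (\<Union>a\<in>{a. s a = u}. (#) a ` {p. \<exists>v. qpath s t (t a) p v})"
    proof
      fix p assume "p \<in> {p. \<exists>v. qpath s t u p v}"
      thus "p \<in> insert [] (\<Union>a\<in>{a. s a = u}. (#) a ` {p. \<exists>v. qpath s t (t a) p v})"
        by (cases p) fastforce+
    qed
    have "finite (\<Union>a\<in>{a. s a = u}. (#) a ` {p. \<exists>v. qpath s t (t a) p v})"
      using 1 by auto
    thus ?case using sub finite_subset by blast
  qed
qed

lemma finite_paths:
  fixes s t :: "'a::finite \<Rightarrow> 'v::finite"
  assumes "acyclic {(s a, t a) | a. True}"
  shows "finite {p. qpath s t u p v}"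
  by (rule finite_subset[OF _ finite_paths_from[OF assms, of u]]) auto

lemma qbas_Delta[simp]: "qbas (Delta s t j) v = {p. qpath s t j p v}"
  by (simp add: Delta_def)

lemma qbas_Delta_pow[simp]: "qbas (Delta_pow s t j d) v = {p. qpath s t j p v} \<times> {..<d}"
  by (auto simp: Delta_pow_def)

lemma act_Delta_Inr: "act s t (Delta s t j) (Inr a) g = 0"
  by (simp add: act_def Delta_def fun_eq_iff)

lemma act_Delta_pow_Inr: "act s t (Delta_pow s t j d) (Inr a) g = 0"
  by (simp add: act_def Delta_pow_def fun_eq_iff case_prod_beta)

lemma act_Delta_Inl:
  assumes fin: "finite {p. qpath s t j p (s a)}"
  shows "act s t (Delta s t j) (Inl a) g =
    (\<lambda>q. if qpath s t j q (t a) \<and> q \<noteq> [] \<and> last q = a then g (butlast q) else 0)"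
proof
  fix q
  show "act s t (Delta s t j) (Inl a) g q =
    (if qpath s t j q (t a) \<and> q \<noteq> [] \<and> last q = a then g (butlast q) else 0)"
  proof (cases "qpath s t j q (t a)")
    case True
    have eq: "(q = x @ [a]) = (x = butlast q \<and> q \<noteq> [] \<and> last q = a)" for x
      by auto
    have "act s t (Delta s t j) (Inl a) g q =
        (\<Sum>x\<in>{p. qpath s t j p (s a)}. (if x = butlast q \<and> q \<noteq> [] \<and> last q = a then 1 else 0) * g x)"
      using True by (simp add: act_def Delta_def eq)
    also have "\<dots> = (\<Sum>x\<in>{p. qpath s t j p (s a)}. if x = butlast q then (if q \<noteq> [] \<and> last q = a then g x else 0) else 0)"
      by (intro sum.cong) auto
    also have "\<dots> = (if q \<noteq> [] \<and> last q = a then g (butlast q) else 0)"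
      using fin qpath_butlast[OF True] by (auto simp: sum.delta)
    finally show ?thesis using True by simp
  next
    case False
    then show ?thesis by (simp add: act_def Delta_def)
  qed
qed

lemma act_Delta_pow_Inl:
  assumes fin: "finite {p. qpath s t j p (s a)}"
  shows "act s t (Delta_pow s t j d) (Inl a) g =
    (\<lambda>(q,k). if qpath s t j q (t a) \<and> k < d \<and> q \<noteq> [] \<and> last q = a then g (butlast q, k) else 0)"
proof
  fix qk :: "'a list \<times> nat"
  obtain q k where qk: "qk = (q,k)" by fastforce
  show "act s t (Delta_pow s t j d) (Inl a) g qk =
    (\<lambda>(q,k). if qpath s t j q (t a) \<and> k < d \<and> q \<noteq> [] \<and> last q = a then g (butlast q, k) else 0) qk"
  proof (cases "qpath s t j q (t a) \<and> k < d")
    case True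
    have eq: "(q = fst x @ [a] \<and> k = snd x) = (x = (butlast q, k) \<and> q \<noteq> [] \<and> last q = a)" for x
      by (cases x) auto
    have "act s t (Delta_pow s t j d) (Inl a) g qk =
        (\<Sum>x\<in>{p. qpath s t j p (s a)} \<times> {..<d}. (if x = (butlast q, k) \<and> q \<noteq> [] \<and> last q = a then 1 else 0) * g x)"
      using True qk by (simp add: act_def Delta_pow_def eq[symmetric] case_prod_beta lessThan_def)
    also have "\<dots> = (\<Sum>x\<in>{p. qpath s t j p (s a)} \<times> {..<d}. if x = (butlast q, k) then (if q \<noteq> [] \<and> last q = a then g x else 0) else 0)"
      by (intro sum.cong) auto
    also have "\<dots> = (if q \<noteq> [] \<and> last q = a then g (butlast q, k) else 0)"
      using fin qpath_butlast[of s t j q "t a"] True by (auto simp: sum.delta)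
    finally show ?thesis using True qk by simp
  next
    case False
    then show ?thesis using qk by (auto simp: act_def Delta_pow_def)
  qed
qed



definition pact :: "('a \<Rightarrow> 'v) \<Rightarrow> ('a \<Rightarrow> 'v) \<Rightarrow> ('v, 'a, 'b, 'k::field) qrep
    \<Rightarrow> ('b \<Rightarrow> 'k) \<Rightarrow> 'a list \<Rightarrow> ('b \<Rightarrow> 'k)" where
  "pact s t R e p = fold (\<lambda>a f. act s t R (Inl a) f) p e"

lemma pact_Nil[simp]: "pact s t R e [] = e" by (simp add: pact_def)
lemma pact_snoc[simp]: "pact s t R e (p @ [a]) = act s t R (Inl a) (pact s t R e p)"
  by (simp add: pact_def)

lemma pact_submod:
  assumes "submod s t R U" "e \<in> U u" "qpath s t u p v"
  shows "pact s t R e p \<in> U v"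
  using assms(3)
proof (induction p arbitrary: v rule: rev_induct)
  case Nil then show ?case using assms(2) by simp
next
  case (snoc a p)
  hence "qpath s t u p (s a)" "t a = v" by (auto simp: qpath_snoc)
  with snoc.IH have "pact s t R e p \<in> U (ds s t (Inl a))" by simp
  with assms(1) have "act s t R (Inl a) (pact s t R e p) \<in> U (dt s t (Inl a))"
    unfolding submod_def by blast
  then show ?case using \<open>t a = v\<close> by simp
qed

lemma submod_vsp: "submod s t R (vsp R)"
  by (simp add: submod_def subsp_vsp act_vsp)

lemma pact_vsp: "e \<in> vsp R u \<Longrightarrow> qpath s t u p v \<Longrightarrow> pact s t R e p \<in> vsp R v"
  by (rule pact_submod[OF submod_vsp])

lemma submod_subsp: "submod s t R U \<Longrightarrow> subsp (vsp R v) (U v)"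
  by (simp add: submod_def)

lemma submod_act: "submod s t R U \<Longrightarrow> f \<in> U (ds s t a) \<Longrightarrow> act s t R a f \<in> U (dt s t a)"
  by (simp add: submod_def)

lemma fun_diff_lam: "(\<lambda>b. x b - y b) = x - (y :: 'b \<Rightarrow> 'k::ab_group_add)"
  by (simp add: fun_eq_iff)

lemma alg_lem: "(a - z) - (a - x) = x - (z::'x::ab_group_add)" by simp

locale qset =
  fixes s t :: "'a::finite \<Rightarrow> 'v::finite"
    and M :: "('v, 'a, 'b, 'k::field) qrep"
    and i :: 'v and r :: nat and F :: "nat \<Rightarrow> 'v \<Rightarrow> ('b \<Rightarrow> 'k) set" and j :: "nat \<Rightarrow> 'v"
    and d :: nat and \<phi> :: "nat \<Rightarrow> 'v \<Rightarrow> 'b \<Rightarrow> 'a list \<Rightarrow> 'k" and h :: "nat \<Rightarrow> nat"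
  assumes acyc: "acyclic {(s a, t a) | a. True}"
    and Dm: "D_module s t M"
    and src: "\<forall>a. t a \<noteq> i"
    and filt: "delta_filtration s t M (zero_sub M) r F j"
    and hb: "bij_betw h {..<d} {l. l < r \<and> j l = i}"
    and ph1: "\<And>l v g. l < r \<Longrightarrow> g \<in> vsp (Delta s t (j l)) v \<Longrightarrow>
        happ (Delta s t (j l)) M (\<phi> l) v g \<in> F (Suc l) v"
    and ph2: "\<And>l v g. l < r \<Longrightarrow> g \<in> vsp (Delta s t (j l)) v \<Longrightarrow>
        happ (Delta s t (j l)) M (\<phi> l) v g \<in> F l v \<Longrightarrow> g = 0"
    and ph3: "\<And>l v y. l < r \<Longrightarrow> y \<in> F (Suc l) v \<Longrightarrow>
        \<exists>g\<in>vsp (Delta s t (j l)) v. y - happ (Delta s t (j l)) M (\<phi> l) v g \<in> F l v"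
    and ph4: "\<And>l a g. l < r \<Longrightarrow> g \<in> vsp (Delta s t (j l)) (ds s t a) \<Longrightarrow>
        act s t M a (happ (Delta s t (j l)) M (\<phi> l) (ds s t a) g)
         - happ (Delta s t (j l)) M (\<phi> l) (dt s t a) (act s t (Delta s t (j l)) a g) \<in> F l (dt s t a)"
begin

abbreviation P where "P u v \<equiv> {p. qpath s t u p v}"
abbreviation pa where "pa \<equiv> pact s t M"

lemma finP: "finite (P u v)" using finite_paths[OF acyc] .

lemma Fsub: "l \<le> r \<Longrightarrow> submod s t M (F l)"
  using filt by (simp add: delta_filtration_def)
lemma Fsubsp: "l \<le> r \<Longrightarrow> subsp (vsp M v) (F l v)"
  by (rule submod_subsp[OF Fsub])
lemma F0: "F 0 v = {0}"
  using filt by (simp add: delta_filtration_def zero_sub_def zero_fun_def)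
lemma Fr: "F r = vsp M"
  using filt by (simp add: delta_filtration_def)
lemma Fmono: "a \<le> b \<Longrightarrow> b \<le> r \<Longrightarrow> F a v \<subseteq> F b v"
proof (induction b rule: dec_induct)
  case (step n)
  then have "F n v \<subseteq> F (Suc n) v" using filt by (simp add: delta_filtration_def)
  then show ?case using step by simp
qed simp

lemma h_lt: "k < d \<Longrightarrow> h k < r" using hb by (auto simp: bij_betw_def)
lemma h_j: "k < d \<Longrightarrow> j (h k) = i" using hb by (auto simp: bij_betw_def)
lemma h_inj: "k < d \<Longrightarrow> k' < d \<Longrightarrow> h k = h k' \<Longrightarrow> k = k'"
  using hb by (auto simp: bij_betw_def inj_on_def)
lemma h_surj: assumes "l < r" "j l = i" shows "\<exists>k<d. h k = l"
proof -
  have "l \<in> h ` {..<d}" using hb assms by (simp add: bij_betw_def)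
  thus ?thesis by auto
qed

lemma P_to_i: "P u i = (if u = i then {[]} else {})"
proof -
  have "qpath s t u p i \<longleftrightarrow> (p = [] \<and> u = i)" for p
    using qpath_to_source[OF src, where u=u and p=p] by auto
  thus ?thesis by auto
qed

lemma star_kills:
  assumes "e \<in> vsp M i" "qpath s t i p v" "t \<gamma> = v"
  shows "act s t M (Inr \<gamma>) (pa e p) = 0"
  using assms(2,3)
proof (induction p arbitrary: v \<gamma> rule: rev_induct)
  case Nil
  then show ?case using src by auto
next
  case (snoc \<alpha> p)
  hence p: "qpath s t i p (s \<alpha>)" and tv: "t \<alpha> = v" by (auto simp: qpath_snoc)
  have pv: "pa e p \<in> vsp M (s \<alpha>)" using pact_vsp[OF assms(1) p] .
  show ?case
  proof (cases "\<gamma> = \<alpha>")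
    case True
    have "act s t M (Inr \<alpha>) (act s t M (Inl \<alpha>) (pa e p))
        = (\<lambda>y. \<Sum>\<delta>\<in>{\<delta>. t \<delta> = s \<alpha>}. act s t M (Inl \<delta>) (act s t M (Inr \<delta>) (pa e p)) y)"
      using Dm pv unfolding D_module_def by blast
    also have "\<dots> = (\<lambda>y. \<Sum>\<delta>\<in>{\<delta>. t \<delta> = s \<alpha>}. (0::'k))"
      by (intro ext sum.cong refl) (simp add: snoc.IH[OF p])
    also have "\<dots> = 0" by (simp add: zero_fun_def)
    finally show ?thesis using True by simp
  next
    case False
    have "act s t M (Inr \<gamma>) (act s t M (Inl \<alpha>) (pa e p)) = (\<lambda>_. 0)"
      using Dm pv False snoc.prems tv unfolding D_module_def by metis
    then show ?thesis by (simp add: zero_fun_def)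
  qed
qed

definition eps where "eps l = happ (Delta s t (j l)) M (\<phi> l) (j l) (dl [])"

lemma dl_vsp: "x \<in> qbas R v \<Longrightarrow> dl x \<in> vsp R v"
  by (auto simp: vsp_def dl_def)

lemma eps_F: "l < r \<Longrightarrow> eps l \<in> F (Suc l) (j l)"
  unfolding eps_def by (rule ph1) (auto intro: dl_vsp)

lemma eps_vsp: "eps l \<in> vsp M (j l)"
  unfolding eps_def by (rule happ_vsp)

lemma F1_dl:
  assumes "l < r" "qpath s t (j l) p v"
  shows "happ (Delta s t (j l)) M (\<phi> l) v (dl p) - pa (eps l) p \<in> F l v"
  using assms(2)
proof (induction p arbitrary: v rule: rev_induct)
  case Nil
  then have "v = j l" by simp
  then show ?case using subsp_zero[OF Fsubsp[of l "j l"]] assms(1) by (simp add: eps_def zero_fun_def)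
next
  case (snoc \<alpha> p)
  hence p: "qpath s t (j l) p (s \<alpha>)" and tv: "t \<alpha> = v" by (auto simp: qpath_snoc)
  let ?H = "happ (Delta s t (j l)) M (\<phi> l)"
  have IH: "?H (s \<alpha>) (dl p) - pa (eps l) p \<in> F l (s \<alpha>)" using snoc.IH[OF p] .
  have sub: "submod s t M (F l)" using Fsub assms(1) by simp
  have A: "act s t M (Inl \<alpha>) (?H (s \<alpha>) (dl p) - pa (eps l) p) \<in> F l (t \<alpha>)"
    using submod_act[OF sub, of "?H (s \<alpha>) (dl p) - pa (eps l) p" "Inl \<alpha>"] IH by simp
  have dlp: "dl p \<in> vsp (Delta s t (j l)) (s \<alpha>)" using p by (auto intro: dl_vsp)
  have B: "act s t M (Inl \<alpha>) (?H (s \<alpha>) (dl p)) - ?H (t \<alpha>) (act s t (Delta s t (j l)) (Inl \<alpha>) (dl p)) \<in> F l (t \<alpha>)"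
    using ph4[OF assms(1), of "dl p" "Inl \<alpha>"] dlp by simp
  have actdl: "act s t (Delta s t (j l)) (Inl \<alpha>) (dl p) = dl (p @ [\<alpha>])"
    using p by (auto simp: act_Delta_Inl[OF finP] dl_def fun_eq_iff qpath_snoc)
  have E1: "act s t M (Inl \<alpha>) (?H (s \<alpha>) (dl p)) - pa (eps l) (p @ [\<alpha>])
      = act s t M (Inl \<alpha>) (?H (s \<alpha>) (dl p) - pa (eps l) p)"
    by (simp only: act_diff pact_snoc)
  have C: "(act s t M (Inl \<alpha>) (?H (s \<alpha>) (dl p)) - pa (eps l) (p @ [\<alpha>]))
     - (act s t M (Inl \<alpha>) (?H (s \<alpha>) (dl p)) - ?H (t \<alpha>) (act s t (Delta s t (j l)) (Inl \<alpha>) (dl p))) \<in> F l (t \<alpha>)"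
    unfolding E1 by (rule subsp_diff[OF Fsubsp A B]) (use assms(1) in simp)
  have EQ: "?H v (dl (p @ [\<alpha>])) - pa (eps l) (p @ [\<alpha>]) =
     (act s t M (Inl \<alpha>) (?H (s \<alpha>) (dl p)) - pa (eps l) (p @ [\<alpha>]))
     - (act s t M (Inl \<alpha>) (?H (s \<alpha>) (dl p)) - ?H (t \<alpha>) (act s t (Delta s t (j l)) (Inl \<alpha>) (dl p)))"
    unfolding actdl tv alg_lem ..
  show ?case unfolding EQ using C unfolding tv .
qed

lemma F1:
  assumes "l < r" "g \<in> vsp (Delta s t (j l)) v"
  shows "happ (Delta s t (j l)) M (\<phi> l) v g - (\<Sum>p\<in>P (j l) v. sc (g p) (pa (eps l) p)) \<in> F l v"
proof -
  let ?H = "happ (Delta s t (j l)) M (\<phi> l)"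
  have "?H v g = (\<Sum>p\<in>P (j l) v. sc (g p) (?H v (dl p)))"
    using happ_expand[of "Delta s t (j l)" v g M "\<phi> l"] finP assms(2) by simp
  hence "?H v g - (\<Sum>p\<in>P (j l) v. sc (g p) (pa (eps l) p))
      = (\<Sum>p\<in>P (j l) v. sc (g p) (?H v (dl p) - pa (eps l) p))"
    by (simp only: fv.scale_right_diff_distrib sum_subtractf)
  also have "\<dots> \<in> F l v"
    using F1_dl[OF assms(1)] Fsubsp[of l v] assms(1)
    by (intro subsp_sum subsp_sc) auto
  finally show ?thesis .
qed

end


context qset
begin

definition W where
  "W v c = (\<Sum>k<d. \<Sum>p\<in>P i v. sc (c (p,k)) (pa (eps (h k)) p))"

lemma eps_hk_vsp: "k < d \<Longrightarrow> eps (h k) \<in> vsp M i"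
  using eps_vsp[of "h k"] h_j by simp

lemma pa_eps_F:
  assumes "k < d" "qpath s t i p v" "Suc (h k) \<le> m" "m \<le> r"
  shows "pa (eps (h k)) p \<in> F m v"
proof -
  have "eps (h k) \<in> F (Suc (h k)) i" using eps_F[OF h_lt[OF assms(1)]] h_j[OF assms(1)] by simp
  moreover have "submod s t M (F (Suc (h k)))" using Fsub h_lt[OF assms(1)] by simp
  ultimately have "pa (eps (h k)) p \<in> F (Suc (h k)) v"
    using pact_submod assms(2) by metis
  thus ?thesis using Fmono[OF assms(3,4)] by blast
qed

lemma W_in:
  assumes "m \<le> r" "\<And>p k. qpath s t i p v \<Longrightarrow> k < d \<Longrightarrow> m \<le> h k \<Longrightarrow> c (p,k) = 0"
  shows "W v c \<in> F m v"
  unfolding W_def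
proof (intro subsp_sum[OF Fsubsp[OF assms(1)]])
  fix k p assume k: "k \<in> {..<d}" and p: "p \<in> P i v"
  show "sc (c (p, k)) (pa (eps (h k)) p) \<in> F m v"
  proof (cases "m \<le> h k")
    case True
    then have "c (p, k) = 0" using assms(2) k p by auto
    then have z: "sc (c (p, k)) (pa (eps (h k)) p) = 0" by (simp add: fun_eq_iff)
    show ?thesis unfolding z by (rule subsp_zero[OF Fsubsp[OF assms(1)]])
  next
    case False
    then show ?thesis using pa_eps_F[of k p v m] k p assms(1)
      by (intro subsp_sc[OF Fsubsp[OF assms(1)]]) auto
  qed
qed

lemma W_zero:
  assumes "\<And>p k. qpath s t i p v \<Longrightarrow> k < d \<Longrightarrow> c (p,k) = 0"
  shows "W v c = 0"
  unfolding W_def using assms by (intro sum.neutral ballI) (auto simp: fun_eq_iff)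

lemma W_add: "W v (\<lambda>x. c1 x + c2 x) = W v c1 + W v c2"
  unfolding W_def by (simp add: fv.scale_left_distrib sum.distrib)

lemma W_diff: "W v (\<lambda>x. c1 x - c2 x) = W v c1 - W v c2"
  unfolding W_def by (simp add: fv.scale_left_diff_distrib sum_subtractf)

lemma W_sc: "W v (\<lambda>x. a * c x) = sc a (W v c)"
  unfolding W_def by (simp add: fv.scale_sum_right)

lemma W_single:
  assumes "k0 < d"
  shows "W v (\<lambda>(p,k). if k = k0 then c (p,k) else 0) = (\<Sum>p\<in>P i v. sc (c (p,k0)) (pa (eps (h k0)) p))"
proof -
  have "W v (\<lambda>(p,k). if k = k0 then c (p,k) else 0)
      = (\<Sum>k<d. if k = k0 then (\<Sum>p\<in>P i v. sc (c (p,k0)) (pa (eps (h k0)) p)) else 0)"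
    unfolding W_def by (intro sum.cong refl) (auto simp: fun_eq_iff)
  also have "\<dots> = (\<Sum>p\<in>P i v. sc (c (p,k0)) (pa (eps (h k0)) p))"
    using assms by (simp add: sum.delta)
  finally show ?thesis .
qed

lemma Key:
  assumes m: "m \<le> r" and WF: "W v c \<in> F m v" and p0: "qpath s t i p0 v" and k0': "k0' < d"
    and mh: "m \<le> h k0'"
  shows "c (p0,k0') = 0"
proof (rule ccontr)
  assume nz: "c (p0,k0') \<noteq> 0"
  define S where "S = {h k | k. k < d \<and> (\<exists>p\<in>P i v. c (p,k) \<noteq> 0)}"
  have finS: "finite S" unfolding S_def
    by (rule finite_subset[of _ "h ` {..<d}"]) auto
  have inS: "h k0' \<in> S" unfolding S_def using k0' p0 nz by auto
  define l0 where "l0 = Max S"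
  have l0ge: "h k0' \<le> l0" unfolding l0_def using finS inS by simp
  have "l0 \<in> S" unfolding l0_def using finS inS Max_in by blast
  then obtain k0 p1 where k0: "k0 < d" "h k0 = l0" and p1: "qpath s t i p1 v" "c (p1,k0) \<noteq> 0"
    unfolding S_def by auto
  have l0r: "l0 < r" using h_lt[OF k0(1)] k0(2) by simp
  have jl0: "j l0 = i" using h_j[OF k0(1)] k0(2) by simp
  have maxS: "h k \<le> l0" if "k < d" "qpath s t i p v" "c (p,k) \<noteq> 0" for k p
    unfolding l0_def using finS that by (intro Max_ge) (auto simp: S_def)
  define c1 where "c1 = (\<lambda>(p,k). if k = k0 then 0 else c (p,k))"
  define c2 where "c2 = (\<lambda>(p,k). if k = k0 then c (p,k) else (0::'k))"
  have csplit: "c = (\<lambda>x. c1 x + c2 x)" by (auto simp: c1_def c2_def fun_eq_iff)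
  have W1: "W v c1 \<in> F l0 v"
  proof (rule W_in)
    show "l0 \<le> r" using l0r by simp
    fix p k assume "qpath s t i p v" "k < d" "l0 \<le> h k"
    then show "c1 (p,k) = 0"
      using maxS[of k p] h_inj[OF _ k0(1)] k0(2) by (force simp: c1_def)
  qed
  have Wc: "W v c \<in> F l0 v" using Fmono[of m l0 v] WF mh l0ge l0r by auto
  have W2: "W v c2 \<in> F l0 v"
    using subsp_diff[OF Fsubsp[of l0 v] Wc W1] l0r unfolding csplit W_add by simp
  have W2eq: "W v c2 = (\<Sum>p\<in>P i v. sc (c (p,k0)) (pa (eps l0) p))"
    unfolding c2_def W_single[OF k0(1)] k0(2) ..
  define g where "g = (\<lambda>p. if qpath s t i p v then c (p,k0) else 0)"
  have gv: "g \<in> vsp (Delta s t (j l0)) v" unfolding jl0 by (auto simp: g_def vsp_def)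
  have sumeq: "(\<Sum>p\<in>P (j l0) v. sc (g p) (pa (eps l0) p)) = W v c2"
    unfolding W2eq jl0 by (intro sum.cong refl) (simp add: g_def)
  have "happ (Delta s t (j l0)) M (\<phi> l0) v g - W v c2 \<in> F l0 v"
    using F1[OF l0r gv] unfolding sumeq .
  hence "happ (Delta s t (j l0)) M (\<phi> l0) v g \<in> F l0 v"
    using subsp_add[OF Fsubsp[of l0 v] _ W2] l0r by fastforce
  hence "g = 0" using ph2[OF l0r gv] by simp
  hence "g p1 = 0" by simp
  thus False using p1 by (simp add: g_def)
qed

definition Phi where "Phi v y pk = pa (eps (h (snd pk))) (fst pk) y"

lemma pa_eps_vsp: "k < d \<Longrightarrow> qpath s t i p v \<Longrightarrow> pa (eps (h k)) p \<in> vsp M v"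
  using pact_vsp[OF eps_hk_vsp] by blast

lemma happ_Phi: "happ (Delta_pow s t i d) M Phi v c = W v c"
proof
  fix y
  show "happ (Delta_pow s t i d) M Phi v c y = W v c y"
  proof (cases "y \<in> qbas M v")
    case True
    have "happ (Delta_pow s t i d) M Phi v c y = (\<Sum>(p,k)\<in>P i v \<times> {..<d}. pa (eps (h k)) p y * c (p,k))"
      using True by (simp add: happ_def Phi_def case_prod_beta)
    also have "\<dots> = (\<Sum>p\<in>P i v. \<Sum>k<d. pa (eps (h k)) p y * c (p,k))"
      by (simp add: sum.cartesian_product)
    also have "\<dots> = (\<Sum>k<d. \<Sum>p\<in>P i v. c (p,k) * pa (eps (h k)) p y)"
      by (subst sum.swap) (simp add: mult.commute)
    also have "\<dots> = W v c y" by (simp add: W_def sum_apply)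
    finally show ?thesis .
  next
    case False
    have "pa (eps (h k)) p y = 0" if "k < d" "qpath s t i p v" for k p
      using pa_eps_vsp[OF that] False by (simp add: vsp_def)
    then show ?thesis using False by (simp add: happ_def W_def sum_apply)
  qed
qed

definition U where "U v = W v ` vsp (Delta_pow s t i d) v"

lemma W_inj: "inj_on (W v) (vsp (Delta_pow s t i d) v)"
proof (rule inj_onI)
  fix c1 c2 assume c1: "c1 \<in> vsp (Delta_pow s t i d) v" and c2: "c2 \<in> vsp (Delta_pow s t i d) v"
    and eq: "W v c1 = W v c2"
  have "W v (\<lambda>x. c1 x - c2 x) \<in> F 0 v" using eq by (simp add: W_diff F0)
  hence z: "c1 (p,k) - c2 (p,k) = 0" if "qpath s t i p v" "k < d" for p k
    using Key[of 0 v "\<lambda>x. c1 x - c2 x" p k] that by simp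
  show "c1 = c2"
  proof
    fix x show "c1 x = c2 x"
    proof (cases "x \<in> P i v \<times> {..<d}")
      case True then show ?thesis using z by auto
    next
      case False
      have "c1 x = 0" using c1 False unfolding vsp_def qbas_Delta_pow mem_Collect_eq by metis
      moreover have "c2 x = 0" using c2 False unfolding vsp_def qbas_Delta_pow mem_Collect_eq by metis
      ultimately show ?thesis by simp
    qed
  qed
qed

lemma act_Delta_pow_vsp: "g \<in> vsp (Delta_pow s t i d) u \<Longrightarrow> act s t (Delta_pow s t i d) a g \<in> vsp (Delta_pow s t i d) (dt s t a)"
  by (rule act_vsp)

lemma hom_Inl:
  assumes g: "g \<in> vsp (Delta_pow s t i d) (s \<alpha>)"
  shows "W (t \<alpha>) (act s t (Delta_pow s t i d) (Inl \<alpha>) g) = act s t M (Inl \<alpha>) (W (s \<alpha>) g)"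
proof -
  let ?A = "act s t (Delta_pow s t i d) (Inl \<alpha>) g"
  have A: "?A (q,k) = (if qpath s t i q (t \<alpha>) \<and> k < d \<and> q \<noteq> [] \<and> last q = \<alpha> then g (butlast q, k) else 0)" for q k
    by (simp add: act_Delta_pow_Inl[OF finP])
  have inner: "(\<Sum>q\<in>P i (t \<alpha>). sc (?A (q,k)) (pa (eps (h k)) q))
     = (\<Sum>p\<in>P i (s \<alpha>). sc (g (p,k)) (pa (eps (h k)) (p @ [\<alpha>])))" if k: "k < d" for k
  proof -
    have inj: "inj_on (\<lambda>p. p @ [\<alpha>]) (P i (s \<alpha>))" by (rule inj_onI) simp
    have sub: "(\<lambda>p. p @ [\<alpha>]) ` P i (s \<alpha>) \<subseteq> P i (t \<alpha>)" by (auto simp: qpath_snoc)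
    have "(\<Sum>p\<in>P i (s \<alpha>). sc (g (p,k)) (pa (eps (h k)) (p @ [\<alpha>])))
        = (\<Sum>q\<in>(\<lambda>p. p @ [\<alpha>]) ` P i (s \<alpha>). sc (?A (q,k)) (pa (eps (h k)) q))"
      by (subst sum.reindex[OF inj]) (auto simp: A k qpath_snoc intro!: sum.cong)
    also have "\<dots> = (\<Sum>q\<in>P i (t \<alpha>). sc (?A (q,k)) (pa (eps (h k)) q))"
    proof (rule sum.mono_neutral_left[OF finP sub], rule ballI)
      fix q assume q: "q \<in> P i (t \<alpha>) - (\<lambda>p. p @ [\<alpha>]) ` P i (s \<alpha>)"
      have "\<not> (q \<noteq> [] \<and> last q = \<alpha>)"
      proof
        assume "q \<noteq> [] \<and> last q = \<alpha>"
        with qpath_butlast[of s t i q "t \<alpha>" \<alpha>] q have "q \<in> (\<lambda>p. p @ [\<alpha>]) ` P i (s \<alpha>)" by auto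
        with q show False by simp
      qed
      then have "?A (q,k) = 0" by (cases "q = []") (auto simp: A)
      then show "sc (?A (q,k)) (pa (eps (h k)) q) = 0" by (simp add: fun_eq_iff)
    qed
    finally show ?thesis by simp
  qed
  have "act s t M (Inl \<alpha>) (W (s \<alpha>) g) = (\<Sum>k<d. \<Sum>p\<in>P i (s \<alpha>). sc (g (p,k)) (pa (eps (h k)) (p @ [\<alpha>])))"
    by (simp add: W_def act_sum act_sc)
  also have "\<dots> = W (t \<alpha>) ?A"
    unfolding W_def by (rule sum.cong[OF refl]) (simp add: inner)
  finally show ?thesis by simp
qed

lemma hom_Inr:
  assumes g: "g \<in> vsp (Delta_pow s t i d) (t \<alpha>)"
  shows "W (s \<alpha>) (act s t (Delta_pow s t i d) (Inr \<alpha>) g) = act s t M (Inr \<alpha>) (W (t \<alpha>) g)"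
proof -
  have "W (s \<alpha>) (act s t (Delta_pow s t i d) (Inr \<alpha>) g) = 0"
    by (rule W_zero) (simp add: act_Delta_pow_Inr)
  moreover have "act s t M (Inr \<alpha>) (W (t \<alpha>) g) = 0"
    unfolding W_def act_sum act_sc
    by (intro sum.neutral ballI) (auto simp: star_kills[OF eps_hk_vsp] fun_eq_iff)
  ultimately show ?thesis by simp
qed

lemma Phi_hom: "is_hom s t (Delta_pow s t i d) M Phi"
  unfolding is_hom_def happ_Phi
proof (intro allI impI)
  fix a and g :: "'a list \<times> nat \<Rightarrow> 'k" assume "g \<in> vsp (Delta_pow s t i d) (ds s t a)"
  then show "W (dt s t a) (act s t (Delta_pow s t i d) a g) = act s t M a (W (ds s t a) g)"
    by (cases a) (simp_all add: hom_Inl hom_Inr)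
qed

lemma U_submod: "submod s t M U"
  unfolding submod_def
proof (intro conjI allI impI)
  fix v
  show "subsp (vsp M v) (U v)"
    unfolding subsp_def
  proof (intro conjI ballI allI)
    show "U v \<subseteq> vsp M v" unfolding U_def using happ_vsp[of "Delta_pow s t i d" M Phi v] unfolding happ_Phi by blast
    have "W v 0 = 0" by (rule W_zero) simp
    thus "(\<lambda>_. 0) \<in> U v" unfolding U_def zero_fun_def[symmetric]
      by (metis image_eqI vsp_zero)
    fix x y assume x: "x \<in> U v" and y: "y \<in> U v"
    then obtain c1 c2 where c1: "c1 \<in> vsp (Delta_pow s t i d) v" "x = W v c1"
      and c2: "c2 \<in> vsp (Delta_pow s t i d) v" "y = W v c2" unfolding U_def by auto
    have "(\<lambda>z. c1 z + c2 z) \<in> vsp (Delta_pow s t i d) v" using c1 c2 by (auto simp: vsp_def)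
    moreover have "(\<lambda>b. x b + y b) = W v (\<lambda>z. c1 z + c2 z)" using c1 c2 by (simp add: W_add fun_eq_iff)
    ultimately show "(\<lambda>b. x b + y b) \<in> U v" unfolding U_def by blast
  next
    fix v a x assume x: "x \<in> U v"
    then obtain c1 where c1: "c1 \<in> vsp (Delta_pow s t i d) v" "x = W v c1" unfolding U_def by auto
    have "(\<lambda>z. a * c1 z) \<in> vsp (Delta_pow s t i d) v" using c1 by (auto simp: vsp_def)
    moreover have "(\<lambda>b. a * x b) = W v (\<lambda>z. a * c1 z)" using c1 by (simp add: W_sc sc_def)
    ultimately show "(\<lambda>b. a * x b) \<in> U v" unfolding U_def by blast
  qed
next
  fix a f assume "f \<in> U (ds s t a)"
  then obtain c where c: "c \<in> vsp (Delta_pow s t i d) (ds s t a)" "f = W (ds s t a) c" unfolding U_def by auto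
  have "act s t M a f = W (dt s t a) (act s t (Delta_pow s t i d) a c)"
    using Phi_hom c unfolding is_hom_def happ_Phi by simp
  then show "act s t M a f \<in> U (dt s t a)" unfolding U_def using act_vsp by blast
qed

lemma U_iso: "iso_onto s t (Delta_pow s t i d) M Phi U"
  unfolding iso_onto_def happ_Phi using Phi_hom W_inj by (simp add: U_def)

end


context qset
begin

abbreviation NN where "NN \<equiv> (Delta_pow s t i d :: ('v, 'a, 'a list \<times> nat, 'k) qrep)"

lemma F_span: "l \<le> r \<Longrightarrow> F l i \<subseteq> fv.span (eps ` {l'. l' < l \<and> j l' = i})"
proof (induction l)
  case 0
  show ?case unfolding F0 using fv.span_zero[of "eps ` {l'. l' < 0 \<and> j l' = i}"] by blast
next
  case (Suc l)
  have lr: "l < r" using Suc by simp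
  have mono: "fv.span (eps ` {l'. l' < l \<and> j l' = i}) \<subseteq> fv.span (eps ` {l'. l' < Suc l \<and> j l' = i})"
    by (intro fv.span_mono) auto
  show ?case
  proof
    fix y assume y: "y \<in> F (Suc l) i"
    obtain g where g: "g \<in> vsp (Delta s t (j l)) i"
      and yg: "y - happ (Delta s t (j l)) M (\<phi> l) i g \<in> F l i"
      using ph3[OF lr y] by blast
    have y1: "y - happ (Delta s t (j l)) M (\<phi> l) i g \<in> fv.span (eps ` {l'. l' < Suc l \<and> j l' = i})"
      using subsetD[OF mono subsetD[OF Suc.IH[OF less_imp_le[OF lr]] yg]] .
    show "y \<in> fv.span (eps ` {l'. l' < Suc l \<and> j l' = i})"
    proof (cases "j l = i")
      case True
      have gq: "g = sc (g []) (dl [])"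
      proof
        fix x show "g x = sc (g []) (dl []) x"
          using g True P_to_i[of i] unfolding vsp_def qbas_Delta by (auto simp: dl_def)
      qed
      have "happ (Delta s t (j l)) M (\<phi> l) i g = sc (g []) (eps l)"
        using True by (subst gq) (simp add: happ_sc eps_def)
      moreover have "eps l \<in> fv.span (eps ` {l'. l' < Suc l \<and> j l' = i})"
        using True by (intro fv.span_base) auto
      ultimately have y2: "happ (Delta s t (j l)) M (\<phi> l) i g \<in> fv.span (eps ` {l'. l' < Suc l \<and> j l' = i})"
        by (simp add: fv.span_scale)
      show ?thesis using fv.span_add[OF y1 y2] by simp
    next
      case False
      have "g = 0"
      proof
        fix x show "g x = 0 x"
          using g False P_to_i[of "j l"] unfolding vsp_def qbas_Delta by auto
      qed
      then show ?thesis using y1 by simp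
    qed
  qed
qed

definition T where "T = (\<lambda>k. eps (h k)) ` {..<d}"

lemma vsp_i_span: "vsp M i \<subseteq> fv.span T"
proof -
  have "h ` {..<d} = {l'. l' < r \<and> j l' = i}" using hb by (simp add: bij_betw_def)
  hence "eps ` {l'. l' < r \<and> j l' = i} = T"
    unfolding T_def by (metis image_image)
  thus ?thesis using F_span[of r] Fr by simp
qed

lemma W_i: "W i c = (\<Sum>k<d. sc (c ([],k)) (eps (h k)))"
  unfolding W_def P_to_i by simp

lemma T_U: "T \<subseteq> U i"
proof
  fix x assume "x \<in> T"
  then obtain k where k: "k < d" "x = eps (h k)" unfolding T_def by auto
  have "W i (dl ([],k)) = (\<Sum>k'<d. if k' = k then eps (h k) else 0)"
    unfolding W_i by (intro sum.cong refl) (auto simp: dl_def fun_eq_iff)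
  also have "\<dots> = eps (h k)" using k by (simp add: sum.delta)
  finally have "x = W i (dl ([],k))" using k by simp
  moreover have "dl ([],k) \<in> vsp NN i" using k by (intro dl_vsp) simp
  ultimately show "x \<in> U i" unfolding U_def by blast
qed

lemma vsp_U: "vsp M i \<subseteq> U i"
proof -
  have "fv.span T \<subseteq> U i"
    by (rule fv.span_minimal[OF T_U subsp_subspace[OF submod_subsp[OF U_submod]]])
  thus ?thesis using vsp_i_span by blast
qed

lemma finNN: "finite (qbas NN v)" using finP by simp

lemma uniqueness:
  assumes sub: "submod s t M U'" and iso: "iso_onto s t NN M \<psi> U'"
  shows "U' = U"
proof -
  let ?H = "happ NN M \<psi>"
  have hom: "is_hom s t NN M \<psi>" and inj: "\<And>v. inj_on (?H v) (vsp NN v)"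
    and img: "\<And>v. ?H v ` vsp NN v = U' v"
    using iso unfolding iso_onto_def by auto
  define b where "b k = ?H i (dl ([],k))" for k
  have dl0: "k < d \<Longrightarrow> dl ([],k) \<in> vsp NN i" for k by (intro dl_vsp) simp
  have bU: "k < d \<Longrightarrow> b k \<in> U' i" for k unfolding b_def img[of i, symmetric] by (rule imageI[OF dl0])
  have a: "?H v (dl (p,k)) = pa (b k) p" if "qpath s t i p v" "k < d" for p k v
    using that(1)
  proof (induction p arbitrary: v rule: rev_induct)
    case Nil then show ?case by (simp add: b_def)
  next
    case (snoc \<alpha> p)
    hence p: "qpath s t i p (s \<alpha>)" and tv: "t \<alpha> = v" by (auto simp: qpath_snoc)
    have dlp: "dl (p,k) \<in> vsp NN (s \<alpha>)" using p that(2) by (intro dl_vsp) simp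
    have act: "act s t NN (Inl \<alpha>) (dl (p,k)) = dl (p @ [\<alpha>], k)"
      using p that(2) by (auto simp: act_Delta_pow_Inl[OF finP] dl_def fun_eq_iff qpath_snoc)
    have "?H (t \<alpha>) (act s t NN (Inl \<alpha>) (dl (p,k))) = act s t M (Inl \<alpha>) (?H (s \<alpha>) (dl (p,k)))"
    proof -
      have "\<forall>g. g \<in> vsp NN (ds s t (Inl \<alpha>)) \<longrightarrow> ?H (dt s t (Inl \<alpha>)) (act s t NN (Inl \<alpha>) g) = act s t M (Inl \<alpha>) (?H (ds s t (Inl \<alpha>)) g)"
        using hom unfolding is_hom_def by blast
      thus ?thesis using dlp by simp
    qed
    then show ?case using snoc.IH[OF p] act tv by simp
  qed
  have binj: "inj_on b {..<d}"
  proof (rule inj_onI)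
    fix k k' assume kd: "k \<in> {..<d}" "k' \<in> {..<d}" and bk: "b k = b k'"
    have "(dl ([],k) :: 'a list \<times> nat \<Rightarrow> 'k) = dl ([],k')"
      using inj_onD[OF inj[of i] _ dl0 dl0] bk kd unfolding b_def by simp
    hence "(dl ([],k) :: 'a list \<times> nat \<Rightarrow> 'k) ([],k) = (dl ([],k') :: 'a list \<times> nat \<Rightarrow> 'k) ([],k)" by simp
    thus "k = k'" by (auto simp: dl_def split: if_splits)
  qed
  define S where "S = b ` {..<d}"
  have cardS: "card S = d" unfolding S_def using card_image[OF binj] by simp
  have SU: "S \<subseteq> U' i" unfolding S_def using bU by auto
  have qbi: "qbas NN i = {[]} \<times> {..<d}" using P_to_i[of i] by simp
  have indep: "fv.independent S"
  proof (rule fv.independent_if_scalars_zero)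
    show "finite S" unfolding S_def by simp
    fix f x assume sum0: "(\<Sum>x\<in>S. sc (f x) x) = 0" and x: "x \<in> S"
    define g :: "'a list \<times> nat \<Rightarrow> 'k" where "g = (\<lambda>(p,k). if p = [] \<and> k < d then f (b k) else (0::'k))"
    have gv: "g \<in> vsp NN i" unfolding vsp_def qbi by (auto simp: g_def)
    have "?H i g = (\<Sum>y\<in>qbas NN i. sc (g y) (?H i (dl y)))"
      by (rule happ_expand[OF finNN gv])
    also have "\<dots> = (\<Sum>k<d. sc (g ([],k)) (?H i (dl ([],k))))"
    proof -
      have e: "qbas NN i = (\<lambda>k. ([],k)) ` {..<d}" unfolding qbi by auto
      show ?thesis unfolding e by (subst sum.reindex) (auto simp: inj_on_def)
    qed
    also have "\<dots> = (\<Sum>k<d. sc (f (b k)) (b k))"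
      by (intro sum.cong refl) (simp add: g_def b_def)
    also have "\<dots> = (\<Sum>x\<in>S. sc (f x) x)"
      unfolding S_def by (simp add: sum.reindex[OF binj])
    finally have "?H i g = ?H i 0" using sum0 by simp
    hence "g = 0" using inj_onD[OF inj[of i] _ gv vsp_zero] by simp
    moreover obtain k where k: "k < d" "x = b k" using x unfolding S_def by auto
    ultimately have "g ([],k) = 0" by simp
    thus "f x = 0" using k by (simp add: g_def)
  qed
  have Ui: "U' i \<subseteq> vsp M i" using submod_subsp[OF sub, of i] by (simp add: subsp_def)
  have ST: "S \<subseteq> fv.span T" using SU Ui vsp_i_span by (meson subset_trans)
  have cardT: "card T \<le> d" unfolding T_def using card_image_le[of "{..<d}"] by simp
  have TS: "T \<subseteq> fv.span S"
  proof
    fix x assume xT: "x \<in> T"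
    show "x \<in> fv.span S"
    proof (rule ccontr)
      assume nx: "x \<notin> fv.span S"
      have ind2: "fv.independent (insert x S)" by (rule fv.independent_insertI[OF nx indep])
      have "insert x S \<subseteq> fv.span T"
        unfolding insert_subset using fv.span_base[OF xT] ST by (rule conjI)
      hence "card (insert x S) \<le> card T"
        using fv.independent_span_bound[OF _ ind2] unfolding T_def by auto
      moreover have "x \<notin> S"
      proof
        assume "x \<in> S" hence "x \<in> fv.span S" by (rule fv.span_base)
        with nx show False by contradiction
      qed
      hence "card (insert x S) = Suc d" using cardS unfolding S_def by simp
      ultimately show False using cardT by simp
    qed
  qed
  have SSU: "fv.span S \<subseteq> U' i"
    by (rule fv.span_minimal[OF SU subsp_subspace[OF submod_subsp[OF sub]]])
  have vspU': "vsp M i \<subseteq> U' i"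
    by (rule subset_trans[OF vsp_i_span subset_trans[OF fv.span_minimal[OF TS fv.subspace_span] SSU]])
  show "U' = U"
  proof
    fix v
    show "U' v = U v"
    proof
      show "U v \<subseteq> U' v"
      proof
        fix y assume "y \<in> U v"
        then obtain c where c: "y = W v c" unfolding U_def by auto
        have "W v c \<in> U' v" unfolding W_def
        proof (intro subsp_sum[OF submod_subsp[OF sub]] subsp_sc[OF submod_subsp[OF sub]])
          fix k p assume k: "k \<in> {..<d}" and p: "p \<in> P i v"
          show "pa (eps (h k)) p \<in> U' v"
            using pact_submod[OF sub subsetD[OF vspU' eps_hk_vsp[of k]]] k p by simp
        qed
        thus "y \<in> U' v" using c by simp
      qed
    next
      show "U' v \<subseteq> U v"
      proof
        fix y assume "y \<in> U' v"
        then obtain g where g: "g \<in> vsp NN v" "y = ?H v g" unfolding img[of v, symmetric] by blast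
        have "?H v g = (\<Sum>x\<in>qbas NN v. sc (g x) (?H v (dl x)))"
          by (rule happ_expand[OF finNN g(1)])
        also have "\<dots> \<in> U v"
        proof (intro subsp_sum[OF submod_subsp[OF U_submod]] subsp_sc[OF submod_subsp[OF U_submod]])
          fix x assume "x \<in> qbas NN v"
          then obtain p k where x: "x = (p,k)" "qpath s t i p v" "k < d" by auto
          have "b k \<in> U i" using subsetD[OF vsp_U subsetD[OF Ui bU[OF x(3)]]] .
          thus "?H v (dl x) \<in> U v" using a[OF x(2,3)] x(1) pact_submod[OF U_submod _ x(2)] by simp
        qed
        finally show "y \<in> U v" using g by simp
      qed
    qed
  qed
qed

end


lemma submod_plus:
  assumes A: "submod s t R A" and B: "submod s t R B"
  shows "submod s t R (\<lambda>v. {x + u | x u. x \<in> A v \<and> u \<in> B v})"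
  unfolding submod_def
proof (intro conjI allI impI)
  fix v
  have sA: "subsp (vsp R v) (A v)" and sB: "subsp (vsp R v) (B v)"
    using submod_subsp[OF A] submod_subsp[OF B] by auto
  show "subsp (vsp R v) {x + u | x u. x \<in> A v \<and> u \<in> B v}"
    unfolding subsp_def
  proof (intro conjI ballI allI subsetI)
    fix y assume "y \<in> {x + u | x u. x \<in> A v \<and> u \<in> B v}"
    then obtain x u where "y = x + u" "x \<in> A v" "u \<in> B v" by blast
    then show "y \<in> vsp R v" using subsp_add[OF subsp_vsp subsp_sub[OF sA] subsp_sub[OF sB]] by simp
  next
    have "0 + 0 \<in> {x + u | x u. x \<in> A v \<and> u \<in> B v}"
      using subsp_zero[OF sA] subsp_zero[OF sB] by blast
    then show "(\<lambda>_. 0) \<in> {x + u | x u. x \<in> A v \<and> u \<in> B v}"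
      by (simp add: zero_fun_def[symmetric])
  next
    fix y z assume "y \<in> {x + u | x u. x \<in> A v \<and> u \<in> B v}" "z \<in> {x + u | x u. x \<in> A v \<and> u \<in> B v}"
    then obtain x1 u1 x2 u2 where "y = x1 + u1" "x1 \<in> A v" "u1 \<in> B v" "z = x2 + u2" "x2 \<in> A v" "u2 \<in> B v"
      by blast
    moreover have "(\<lambda>b. y b + z b) = (x1 + x2) + (u1 + u2)" using calculation by (simp add: fun_eq_iff)
    ultimately show "(\<lambda>b. y b + z b) \<in> {x + u | x u. x \<in> A v \<and> u \<in> B v}"
      using subsp_add[OF sA] subsp_add[OF sB] by blast
  next
    fix c y assume "y \<in> {x + u | x u. x \<in> A v \<and> u \<in> B v}"
    then obtain x u where xu: "y = x + u" "x \<in> A v" "u \<in> B v" by blast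
    have "(\<lambda>b. c * y b) = sc c x + sc c u" using xu by (simp add: fun_eq_iff algebra_simps)
    then show "(\<lambda>b. c * y b) \<in> {x + u | x u. x \<in> A v \<and> u \<in> B v}"
      using subsp_sc[OF sA xu(2)] subsp_sc[OF sB xu(3)] by blast
  qed
next
  fix a f assume "f \<in> {x + u | x u. x \<in> A (ds s t a) \<and> u \<in> B (ds s t a)}"
  then obtain x u where xu: "f = x + u" "x \<in> A (ds s t a)" "u \<in> B (ds s t a)" by blast
  have "act s t R a f = act s t R a x + act s t R a u" using xu by (simp add: act_add)
  then show "act s t R a f \<in> {x + u | x u. x \<in> A (dt s t a) \<and> u \<in> B (dt s t a)}"
    using submod_act[OF A xu(2)] submod_act[OF B xu(3)] by blast
qed

lemma compress:
  fixes G :: "nat \<Rightarrow> 'v \<Rightarrow> ('b \<Rightarrow> 'k::field) set"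
  assumes "\<forall>l<n. G l = G (Suc l) \<or> subquot_iso s t M (G l) (G (Suc l)) (Delta s t (J l) :: ('v, 'a, 'a list, 'k) qrep)"
    and "\<forall>l\<le>n. submod s t M (G l)"
    and "\<forall>l<n. \<forall>v. G l v \<subseteq> G (Suc l) v"
  shows "\<exists>r' F' j'. F' 0 = G 0 \<and> F' r' = G n \<and> (\<forall>l\<le>r'. submod s t M (F' l)) \<and>
     (\<forall>l<r'. \<forall>v. F' l v \<subseteq> F' (Suc l) v) \<and>
     (\<forall>l<r'. subquot_iso s t M (F' l) (F' (Suc l)) (Delta s t (j' l) :: ('v, 'a, 'a list, 'k) qrep))"
  using assms
proof (induction n)
  case 0
  show ?case
    by (rule exI[of _ 0], rule exI[of _ "\<lambda>_. G 0"]) (use 0 in auto)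
next
  case (Suc n)
  have p1: "\<forall>l<n. G l = G (Suc l) \<or> subquot_iso s t M (G l) (G (Suc l)) (Delta s t (J l) :: ('v, 'a, 'a list, 'k) qrep)"
    using Suc.prems(1) by simp
  have p2: "\<forall>l\<le>n. submod s t M (G l)" using Suc.prems(2) by simp
  have p3: "\<forall>l<n. \<forall>v. G l v \<subseteq> G (Suc l) v" using Suc.prems(3) by simp
  obtain r' F' j' where IH: "F' 0 = G 0" "F' r' = G n" "\<forall>l\<le>r'. submod s t M (F' l)"
     "\<forall>l<r'. \<forall>v. F' l v \<subseteq> F' (Suc l) v"
     "\<forall>l<r'. subquot_iso s t M (F' l) (F' (Suc l)) (Delta s t (j' l) :: ('v, 'a, 'a list, 'k) qrep)"
    using Suc.IH[OF p1 p2 p3] by blast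
  have step: "G n = G (Suc n) \<or> subquot_iso s t M (G n) (G (Suc n)) (Delta s t (J n) :: ('v, 'a, 'a list, 'k) qrep)"
    using Suc.prems(1) by simp
  show ?case
  proof (cases "G n = G (Suc n)")
    case True
    show ?thesis by (intro exI[of _ r'] exI[of _ F'] exI[of _ j']) (use IH True in auto)
  next
    case False
    with step have sq: "subquot_iso s t M (G n) (G (Suc n)) (Delta s t (J n) :: ('v, 'a, 'a list, 'k) qrep)" by simp
    define F'' where "F'' = F'(Suc r' := G (Suc n))"
    define j'' where "j'' = j'(r' := J n)"
    have a: "F'' l = F' l" if "l \<le> r'" for l using that by (simp add: F''_def)
    show ?thesis
    proof (rule exI[of _ "Suc r'"], rule exI[of _ F''], rule exI[of _ j''], intro conjI allI impI)
      show "F'' 0 = G 0" using a[of 0] IH(1) by simp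
      show "F'' (Suc r') = G (Suc n)" by (simp add: F''_def)
      fix l
      { assume "l \<le> Suc r'"
        then show "submod s t M (F'' l)"
          using IH(3) a Suc.prems(2) by (cases "l = Suc r'") (auto simp: F''_def) }
      { fix v assume "l < Suc r'"
        then show "F'' l v \<subseteq> F'' (Suc l) v"
          using IH(2,4) a Suc.prems(3) by (cases "l = r'") (auto simp: F''_def) }
      { assume "l < Suc r'"
        then show "subquot_iso s t M (F'' l) (F'' (Suc l)) (Delta s t (j'' l) :: ('v, 'a, 'a list, 'k) qrep)"
          using IH(2,5) a sq by (cases "l = r'") (auto simp: F''_def j''_def) }
    qed
  qed
qed

context qset
begin

definition G where "G l v = {x + u | x u. x \<in> F l v \<and> u \<in> U v}"

lemma G_submod: "l \<le> r \<Longrightarrow> submod s t M (G l)"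
  unfolding G_def[abs_def] by (rule submod_plus[OF Fsub U_submod])

lemma U0: "0 \<in> U v" using subsp_zero[OF submod_subsp[OF U_submod]] .

lemma F_G: "x \<in> F l v \<Longrightarrow> x \<in> G l v"
  unfolding G_def by (rule CollectI, rule exI[of _ x], rule exI[of _ 0]) (simp add: U0)

lemma G0: "G 0 = U"
proof
  fix v
  have "G 0 v = (\<lambda>u. 0 + u) ` U v" unfolding G_def F0 by blast
  thus "G 0 v = U v" by simp
qed

lemma Gr: "G r = vsp M"
proof (intro ext set_eqI iffI)
  fix v y assume "y \<in> G r v"
  then show "y \<in> vsp M v"
    using submod_subsp[OF G_submod[of r]] by (simp add: subsp_def subset_iff)
next
  fix v y assume "y \<in> vsp M v"
  then show "y \<in> G r v" using F_G Fr by simp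
qed

lemma G_mono: "l < r \<Longrightarrow> G l v \<subseteq> G (Suc l) v"
  unfolding G_def using Fmono[of l "Suc l" v] by auto

lemma G_eq:
  assumes lr: "l < r" and jl: "j l = i"
  shows "G l = G (Suc l)"
proof (intro ext equalityI)
  fix v show "G l v \<subseteq> G (Suc l) v" using G_mono[OF lr] .
  show "G (Suc l) v \<subseteq> G l v"
  proof
    fix y assume "y \<in> G (Suc l) v"
    then obtain x u where xu: "y = x + u" "x \<in> F (Suc l) v" "u \<in> U v" unfolding G_def by blast
    obtain g where g: "g \<in> vsp (Delta s t (j l)) v" and xg: "x - happ (Delta s t (j l)) M (\<phi> l) v g \<in> F l v"
      using ph3[OF lr xu(2)] by blast
    let ?H = "happ (Delta s t (j l)) M (\<phi> l) v g"
    let ?S = "\<Sum>p\<in>P (j l) v. sc (g p) (pa (eps l) p)"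
    have f1: "?H - ?S \<in> F l v" by (rule F1[OF lr g])
    obtain kl where kl: "kl < d" "h kl = l" using h_surj[OF lr jl] by blast
    define c :: "'a list \<times> nat \<Rightarrow> 'k" where "c = (\<lambda>(p,k). if k = kl then g p else 0)"
    have cv: "c \<in> vsp NN v" using g jl kl(1) unfolding vsp_def c_def by auto
    have "W v c = (\<Sum>p\<in>P i v. sc (c (p,kl)) (pa (eps (h kl)) p))"
      unfolding c_def W_single[OF kl(1), symmetric] by (intro arg_cong[where f="W v"]) (auto simp: fun_eq_iff)
    also have "\<dots> = ?S" using jl kl by (simp add: c_def)
    finally have WS: "W v c = ?S" .
    have "?S \<in> U v" unfolding U_def WS[symmetric] using cv by (rule imageI)
    hence su: "?S + u \<in> U v" using subsp_add[OF submod_subsp[OF U_submod] _ xu(3)] by blast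
    have fl: "(x - ?H) + (?H - ?S) \<in> F l v" using subsp_add[OF Fsubsp xg f1] lr by simp
    have "y = ((x - ?H) + (?H - ?S)) + (?S + u)" using xu(1) by (simp add: algebra_simps)
    then show "y \<in> G l v" unfolding G_def using fl su by blast
  qed
qed

lemma G_sq:
  assumes lr: "l < r" and jl: "j l \<noteq> i"
  shows "subquot_iso s t M (G l) (G (Suc l)) (Delta s t (j l))"
  unfolding subquot_iso_def
proof (rule exI[of _ "\<phi> l"], intro conjI allI impI)
  let ?H = "happ (Delta s t (j l)) M (\<phi> l)"
  fix v and g :: "'a list \<Rightarrow> 'k" assume g: "g \<in> vsp (Delta s t (j l)) v"
  show "?H v g \<in> G (Suc l) v" by (rule F_G[OF ph1[OF lr g]])
next
  let ?H = "happ (Delta s t (j l)) M (\<phi> l)"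
  fix v and g :: "'a list \<Rightarrow> 'k" assume "g \<in> vsp (Delta s t (j l)) v \<and> ?H v g \<in> G l v"
  hence g: "g \<in> vsp (Delta s t (j l)) v" and hg: "?H v g \<in> G l v" by auto
  obtain x u where xu: "?H v g = x + u" "x \<in> F l v" "u \<in> U v" using hg unfolding G_def by blast
  obtain c where c: "c \<in> vsp NN v" "u = W v c" using xu(3) unfolding U_def by blast
  define c1 where "c1 = (\<lambda>(p,k). if h k < l then c (p,k) else 0)"
  define c2 where "c2 = (\<lambda>(p,k). if h k < l then 0 else c (p,k))"
  have csp: "c = (\<lambda>x. c1 x + c2 x)" by (auto simp: c1_def c2_def fun_eq_iff)
  have W1: "W v c1 \<in> F l v" by (rule W_in) (use lr in \<open>auto simp: c1_def\<close>)
  have sl: "subsp (vsp M v) (F (Suc l) v)" using Fsubsp lr by simp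
  have W1': "W v c1 \<in> F (Suc l) v" using W1 Fmono[of l "Suc l" v] lr by auto
  have x': "x \<in> F (Suc l) v" using xu(2) Fmono[of l "Suc l" v] lr by auto
  have uW: "u = W v c1 + W v c2" unfolding c(2) by (subst csp) (rule W_add)
  have "W v c2 = ?H v g - x - W v c1" unfolding xu(1) uW by simp
  hence W2: "W v c2 \<in> F (Suc l) v"
    using subsp_diff[OF sl subsp_diff[OF sl ph1[OF lr g] x'] W1'] by simp
  have "W v c2 = 0"
  proof (rule W_zero)
    fix p k assume p: "qpath s t i p v" and k: "k < d"
    show "c2 (p,k) = 0"
    proof (cases "h k < l")
      case True then show ?thesis by (simp add: c2_def)
    next
      case False
      have "h k \<noteq> l" using h_j[OF k] jl by auto
      with False have "Suc l \<le> h k" by simp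
      then show ?thesis using Key[OF _ W2 p k] lr by simp
    qed
  qed
  hence "?H v g = x + W v c1" unfolding xu(1) uW by simp
  hence "?H v g \<in> F l v" using subsp_add[OF Fsubsp xu(2) W1] lr by simp
  then show "g = (\<lambda>_. 0)" using ph2[OF lr g] by (simp add: zero_fun_def)
next
  let ?H = "happ (Delta s t (j l)) M (\<phi> l)"
  fix v y assume "y \<in> G (Suc l) v"
  then obtain x u where xu: "y = x + u" "x \<in> F (Suc l) v" "u \<in> U v" unfolding G_def by blast
  obtain g where g: "g \<in> vsp (Delta s t (j l)) v" and xg: "x - ?H v g \<in> F l v"
    using ph3[OF lr xu(2)] by blast
  have "y - ?H v g = (x - ?H v g) + u" using xu(1) by (simp add: algebra_simps)
  hence "y - ?H v g \<in> G l v" unfolding G_def using xg xu(3) by blast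
  moreover have "(\<lambda>b. y b - ?H v g b) = y - ?H v g" by (rule ext) simp
  ultimately have yg: "(\<lambda>b. y b - ?H v g b) \<in> G l v" by simp
  show "\<exists>g\<in>vsp (Delta s t (j l)) v. (\<lambda>b. y b - ?H v g b) \<in> G l v"
  proof (rule bexI[where x = g])
    show "(\<lambda>b. y b - ?H v g b) \<in> G l v" by (rule yg)
    show "g \<in> vsp (Delta s t (j l)) v" by (rule g)
  qed
next
  fix a and g :: "'a list \<Rightarrow> 'k" assume ga: "g \<in> vsp (Delta s t (j l)) (ds s t a)"
  have e: "(\<lambda>b. act s t M a (happ (Delta s t (j l)) M (\<phi> l) (ds s t a) g) b -
      happ (Delta s t (j l)) M (\<phi> l) (dt s t a) (act s t (Delta s t (j l)) a g) b) =
      act s t M a (happ (Delta s t (j l)) M (\<phi> l) (ds s t a) g) -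
      happ (Delta s t (j l)) M (\<phi> l) (dt s t a) (act s t (Delta s t (j l)) a g)" by (rule ext) simp
  show "(\<lambda>b. act s t M a (happ (Delta s t (j l)) M (\<phi> l) (ds s t a) g) b -
      happ (Delta s t (j l)) M (\<phi> l) (dt s t a) (act s t (Delta s t (j l)) a g) b) \<in> G l (dt s t a)"
    unfolding e by (rule F_G[OF ph4[OF lr ga]])
qed

lemma quotient_filtration: "\<exists>r' F' j'. delta_filtration s t M U r' F' j'"
proof -
  have "\<exists>r' F' j'. F' 0 = G 0 \<and> F' r' = G r \<and> (\<forall>l\<le>r'. submod s t M (F' l)) \<and>
     (\<forall>l<r'. \<forall>v. F' l v \<subseteq> F' (Suc l) v) \<and>
     (\<forall>l<r'. subquot_iso s t M (F' l) (F' (Suc l)) (Delta s t (j' l) :: ('v, 'a, 'a list, 'k) qrep))"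
  proof (rule compress[where J = j and G = G and n = r])
    show "\<forall>l<r. G l = G (Suc l) \<or> subquot_iso s t M (G l) (G (Suc l)) (Delta s t (j l) :: ('v, 'a, 'a list, 'k) qrep)"
      using G_eq G_sq by blast
    show "\<forall>l\<le>r. submod s t M (G l)" using G_submod by blast
    show "\<forall>l<r. \<forall>v. G l v \<subseteq> G (Suc l) v" using G_mono by blast
  qed
  thus ?thesis unfolding delta_filtration_def G0 Gr by blast
qed

end

lemma lam_diff_mem: "(\<lambda>b. x b - y b) \<in> S \<Longrightarrow> x - (y :: 'b \<Rightarrow> 'k::ab_group_add) \<in> S"
proof -
  assume a: "(\<lambda>b. x b - y b) \<in> S"
  have "x - y = (\<lambda>b. x b - y b)" by (rule ext) simp
  thus ?thesis using a by simp
qed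

theorem mainTheorem10:
  fixes s t :: "'a::finite \<Rightarrow> 'v::finite"
    and M :: "('v, 'a, 'b, 'k::field) qrep"
    and i :: 'v and r :: nat and F :: "nat \<Rightarrow> 'v \<Rightarrow> ('b \<Rightarrow> 'k) set" and j :: "nat \<Rightarrow> 'v"
    and d :: nat
  assumes "alg_closed TYPE('k)"
    and "acyclic {(s a, t a) | a. True}"
    and "D_module s t M"
    and "\<forall>a. t a \<noteq> i"
    and "delta_filtration s t M (zero_sub M) r F j"
    and "d = card {l. l < r \<and> j l = i}"
    and "d > 0"
  shows "\<exists>U. submod s t M U \<and> (\<exists>\<phi>. iso_onto s t (Delta_pow s t i d) M \<phi> U) \<and>
           (\<forall>U'. submod s t M U' \<and> (\<exists>\<phi>. iso_onto s t (Delta_pow s t i d) M \<phi> U') \<longrightarrow> U' = U) \<and>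
           (\<exists>r' F' j'. delta_filtration s t M U r' F' j')"
proof -
  have finI: "finite {l. l < r \<and> j l = i}" by simp
  obtain h where hb0: "bij_betw h {0..<card {l. l < r \<and> j l = i}} {l. l < r \<and> j l = i}"
    using ex_bij_betw_nat_finite[OF finI] by blast
  hence hb: "bij_betw h {..<d} {l. l < r \<and> j l = i}" using assms(6) by (simp add: atLeast0LessThan)
  have sq: "\<forall>l<r. subquot_iso s t M (F l) (F (Suc l)) (Delta s t (j l) :: ('v, 'a, 'a list, 'k) qrep)"
    using assms(5) by (simp add: delta_filtration_def)
  define Bd :: "nat \<Rightarrow> ('v \<Rightarrow> 'b \<Rightarrow> 'a list \<Rightarrow> 'k) \<Rightarrow> bool" where "Bd l \<phi> \<longleftrightarrow> (
     (\<forall>v g. g \<in> vsp (Delta s t (j l) :: ('v, 'a, 'a list, 'k) qrep) v \<longrightarrow> happ (Delta s t (j l)) M \<phi> v g \<in> F (Suc l) v) \<and>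
     (\<forall>v g. g \<in> vsp (Delta s t (j l) :: ('v, 'a, 'a list, 'k) qrep) v \<and> happ (Delta s t (j l)) M \<phi> v g \<in> F l v \<longrightarrow> g = (\<lambda>_. 0)) \<and>
     (\<forall>v y. y \<in> F (Suc l) v \<longrightarrow> (\<exists>g\<in>vsp (Delta s t (j l) :: ('v, 'a, 'a list, 'k) qrep) v. (\<lambda>b. y b - happ (Delta s t (j l)) M \<phi> v g b) \<in> F l v)) \<and>
     (\<forall>a g. g \<in> vsp (Delta s t (j l) :: ('v, 'a, 'a list, 'k) qrep) (ds s t a) \<longrightarrow>
        (\<lambda>b. act s t M a (happ (Delta s t (j l)) M \<phi> (ds s t a) g) b - happ (Delta s t (j l)) M \<phi> (dt s t a) (act s t (Delta s t (j l)) a g) b)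
          \<in> F l (dt s t a)))" for l \<phi>
  define \<Phi> where "\<Phi> l = (SOME \<phi>. Bd l \<phi>)" for l
  have exB: "\<exists>\<phi>. Bd l \<phi>" if lr: "l < r" for l
    using sq lr unfolding subquot_iso_def Bd_def by blast
  have \<Phi>: "Bd l (\<Phi> l)" if lr: "l < r" for l
    unfolding \<Phi>_def using exB[OF lr] by (rule someI_ex)
  note \<Phi> = \<Phi>[unfolded Bd_def]
  interpret Q: qset s t M i r F j d \<Phi> h
  proof
    show "acyclic {(s a, t a) | a. True}" by (rule assms(2))
    show "D_module s t M" by (rule assms(3))
    show "\<forall>a. t a \<noteq> i" by (rule assms(4))
    show "delta_filtration s t M (zero_sub M) r F j" by (rule assms(5))
    show "bij_betw h {..<d} {l. l < r \<and> j l = i}" by (rule hb)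
    fix l v and g :: "'a list \<Rightarrow> 'k"
    assume lr: "l < r" and g: "g \<in> vsp (Delta s t (j l)) v"
    show "happ (Delta s t (j l)) M (\<Phi> l) v g \<in> F (Suc l) v" using \<Phi>[OF lr] g by blast
  next
    fix l v and g :: "'a list \<Rightarrow> 'k"
    assume lr: "l < r" and g: "g \<in> vsp (Delta s t (j l)) v" and h: "happ (Delta s t (j l)) M (\<Phi> l) v g \<in> F l v"
    have "g = (\<lambda>_. 0)" using \<Phi>[OF lr] g h by blast
    thus "g = 0" by (simp add: zero_fun_def)
  next
    fix l v y
    assume lr: "l < r" and y: "y \<in> F (Suc l) v"
    obtain g where g: "g \<in> vsp (Delta s t (j l) :: ('v, 'a, 'a list, 'k) qrep) v"
      and yg: "(\<lambda>b. y b - happ (Delta s t (j l)) M (\<Phi> l) v g b) \<in> F l v"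
      using \<Phi>[OF lr] y by blast
    show "\<exists>g\<in>vsp (Delta s t (j l)) v. y - happ (Delta s t (j l)) M (\<Phi> l) v g \<in> F l v"
    proof (rule bexI[where x = g])
      show "y - happ (Delta s t (j l)) M (\<Phi> l) v g \<in> F l v" by (rule lam_diff_mem[OF yg])
      show "g \<in> vsp (Delta s t (j l)) v" by (rule g)
    qed
  next
    fix l a and g :: "'a list \<Rightarrow> 'k"
    assume lr: "l < r" and g: "g \<in> vsp (Delta s t (j l)) (ds s t a)"
    have "(\<lambda>b. act s t M a (happ (Delta s t (j l)) M (\<Phi> l) (ds s t a) g) b - happ (Delta s t (j l)) M (\<Phi> l) (dt s t a) (act s t (Delta s t (j l)) a g) b)
          \<in> F l (dt s t a)" using \<Phi>[OF lr] g by blast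
    thus "act s t M a (happ (Delta s t (j l)) M (\<Phi> l) (ds s t a) g)
         - happ (Delta s t (j l)) M (\<Phi> l) (dt s t a) (act s t (Delta s t (j l)) a g) \<in> F l (dt s t a)"
      by (rule lam_diff_mem)
  qed
  show ?thesis
  proof (intro exI[of _ Q.U] conjI allI impI)
    show "submod s t M Q.U" by (rule Q.U_submod)
    show "\<exists>\<phi>. iso_onto s t (Delta_pow s t i d) M \<phi> Q.U" using Q.U_iso by blast
    show "\<exists>r' F' j'. delta_filtration s t M Q.U r' F' j'" by (rule Q.quotient_filtration)
    fix U' assume "submod s t M U' \<and> (\<exists>\<phi>. iso_onto s t (Delta_pow s t i d) M \<phi> U')"
    then show "U' = Q.U" using Q.uniqueness by blast
  qed
qed

end
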